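(* Let $\vec B=(b_0,\dots,b_{N-1})$ be a binary digit vector of length $N$ (scale factor $N$). Then $\vec B$ is uniquely determined by the values $\{F_{\vec B}(k/N)\}_{k=1}^{N-1}$; i.e., if $\vec B,\vec C$ are binary digit vectors both of length $N$ with $F_{\vec B}(k/N)=F_{\vec C}(k/N)$ for $k=1,\dots,N-1$, then $\vec B=\vec C$.
   Context: A binary digit vector of length (scale factor) $N\ge3$ is $\vec B=(b_0,\dots,b_{N-1})\in\{0,1\}^N$ with $2\le\|\vec B\|:=\sum_i b_i\le N-1$; its digit set is $D=\{i:b_i=1\}$. With $\phi_d(x)=(x+d)/N$ for $d\in D$, let $\mu_{\vec B}$ be the unique Borel probability measure with $\mu_{\vec B}=\frac{1}{\|\vec B\|}\sum_{d\in D}\mu_{\vec B}\circ\phi_d^{-1}$, supported on the attractor $C_{\vec B}\subset[0,1]$. The CDF is $F_{\vec B}(x)=\mu_{\vec B}([0,x])$, $x\in[0,1]$. *)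

theory Defs
  imports "HOL-Probability.Probability"
begin

definition binary_digit_vector :: "nat \<Rightarrow> nat list \<Rightarrow> bool" where
  "binary_digit_vector N B \<longleftrightarrow> N \<ge> 3 \<and> length B = N \<and> set B \<subseteq> {0, 1}
     \<and> 2 \<le> sum_list B \<and> sum_list B \<le> N - 1"

definition digit_set :: "nat list \<Rightarrow> nat set" where
  "digit_set B = {i. i < length B \<and> B ! i = 1}"

definition ifs_map :: "nat list \<Rightarrow> nat \<Rightarrow> real \<Rightarrow> real" where
  "ifs_map B d x = (x + real d) / real (length B)"

definition self_similar_measure :: "nat list \<Rightarrow> real measure \<Rightarrow> bool" where
  "self_similar_measure B M \<longleftrightarrow> sets M = sets borel \<and> prob_space M \<and>
     (\<forall>A \<in> sets borel. emeasure M A =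
        (\<Sum>d\<in>digit_set B. emeasure M (ifs_map B d -` A)) / of_nat (sum_list B))"

definition mu_B :: "nat list \<Rightarrow> real measure" where
  "mu_B B = (THE M. self_similar_measure B M)"

definition cdf_B :: "nat list \<Rightarrow> real \<Rightarrow> real" where
  "cdf_B B x = measure (mu_B B) {0..x}"

end

theory Submission
  imports Defs
begin


lemma bdv_basic:
  assumes "binary_digit_vector N B"
  shows "length B = N" "N \<ge> 3" "finite (digit_set B)" "digit_set B \<subseteq> {..<N}"
    "card (digit_set B) = sum_list B" "sum_list B \<ge> 2" "sum_list B \<le> N - 1"
    "\<And>i. i < N \<Longrightarrow> B ! i = 0 \<or> B ! i = 1"
proof -
  show l: "length B = N" "N \<ge> 3" "sum_list B \<ge> 2" "sum_list B \<le> N - 1"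
    using assms by (auto simp: binary_digit_vector_def)
  show "finite (digit_set B)" "digit_set B \<subseteq> {..<N}" using l by (auto simp: digit_set_def)
  show b: "\<And>i. i < N \<Longrightarrow> B ! i = 0 \<or> B ! i = 1"
    using assms l unfolding binary_digit_vector_def by (metis insertE nth_mem singletonD subsetD)
  have "sum_list B = (\<Sum>i<N. B ! i)" using l by (simp add: sum_list_sum_nth lessThan_atLeast0)
  also have "\<dots> = (\<Sum>i<N. if B ! i = 1 then 1 else 0)"
    by (intro sum.cong refl) (metis b lessThan_iff)
  also have "\<dots> = card (digit_set B)"
    by (simp add: sum.If_cases digit_set_def l) (rule arg_cong[where f=card], auto)
  finally show "card (digit_set B) = sum_list B" by simp
qed

lemma ss_measure:
  assumes ss: "self_similar_measure B M" and bdv: "binary_digit_vector N B"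
    and A: "A \<in> sets borel"
  shows "measure M A = (\<Sum>d\<in>digit_set B. measure M (ifs_map B d -` A)) / real (sum_list B)"
proof -
  interpret prob_space M using ss by (simp add: self_similar_measure_def)
  have sM: "sets M = sets borel" using ss by (simp add: self_similar_measure_def)
  have meas: "ifs_map B d \<in> borel_measurable borel" for d
    unfolding ifs_map_def by measurable
  have pre: "ifs_map B d -` A \<in> sets M" for d
    using measurable_sets[OF meas A] sM by simp
  have n: "sum_list B \<ge> 2" using bdv_basic[OF bdv] by simp
  have "ennreal (measure M A) = (\<Sum>d\<in>digit_set B. ennreal (measure M (ifs_map B d -` A))) / of_nat (sum_list B)"
  proof -
    have "emeasure M A = (\<Sum>d\<in>digit_set B. emeasure M (ifs_map B d -` A)) / of_nat (sum_list B)"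
      using ss A unfolding self_similar_measure_def by blast
    then show ?thesis by (simp only: emeasure_eq_measure)
  qed
  also have "\<dots> = ennreal ((\<Sum>d\<in>digit_set B. measure M (ifs_map B d -` A)) / real (sum_list B))"
    using n by (simp add: divide_ennreal ennreal_of_nat_eq_real_of_nat sum_nonneg)
  finally show ?thesis
    by (subst (asm) ennreal_inj) (auto intro!: divide_nonneg_nonneg sum_nonneg)
qed

lemma iter_le_zero:
  fixes f :: "real \<Rightarrow> real" and c a :: real
  assumes c: "c > 1" and step: "\<And>a. a > 0 \<Longrightarrow> f a \<le> f (c * a)" and a: "a > 0"
    and lim: "(\<lambda>k. f (c ^ k * a)) \<longlonglongrightarrow> 0"
  shows "f a \<le> 0"
proof -
  have "f a \<le> f (c ^ k * a)" for k
  proof (induction k)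
    case 0 then show ?case by simp
  next
    case (Suc k)
    have "c ^ k * a > 0" using c a by simp
    then have "f (c ^ k * a) \<le> f (c * (c ^ k * a))" by (rule step)
    then show ?case using Suc by (simp add: mult.assoc)
  qed
  then show ?thesis using LIMSEQ_le_const[OF lim, of "f a"] by auto
qed

lemma pow_at_top:
  fixes c a :: real assumes "c > 1" "a > 0"
  shows "filterlim (\<lambda>k. c ^ k * a) at_top sequentially"
proof -
  have "filterlim (\<lambda>k. c ^ k) at_top sequentially"
    unfolding filterlim_at_top
  proof
    fix Z :: real
    obtain n where n: "Z < c ^ n" using real_arch_pow[OF assms(1)] by blast
    show "\<forall>\<^sub>F k in sequentially. Z \<le> c ^ k"
    proof (rule eventually_sequentiallyI[of n])
      fix k assume "n \<le> k"
      then have "c ^ n \<le> c ^ k" using assms(1) by (intro power_increasing) auto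
      then show "Z \<le> c ^ k" using n by linarith
    qed
  qed
  then have "filterlim (\<lambda>k. a * c ^ k) at_top sequentially"
    by (rule filterlim_tendsto_pos_mult_at_top[OF tendsto_const assms(2)])
  then show ?thesis by (simp add: mult.commute)
qed

lemma ss_real_dist:
  assumes "self_similar_measure B M" shows "real_distribution M"
  using assms unfolding self_similar_measure_def real_distribution_def real_distribution_axioms_def by auto

lemma sum_le_card_mult:
  fixes g :: "nat \<Rightarrow> real"
  assumes "\<And>d. d \<in> D \<Longrightarrow> g d \<le> m"
  shows "sum g D \<le> real (card D) * m"
  using sum_mono[of D g "\<lambda>_. m", OF assms] by simp

lemma lower_tail:
  assumes ss: "self_similar_measure B M" and bdv: "binary_digit_vector N B" and a: "a > 0"
  shows "measure M {..< -a} = 0"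
proof -
  interpret real_distribution M by (rule ss_real_dist[OF ss])
  note bb = bdv_basic[OF bdv]
  define f where "f a = measure M {..< -a}" for a
  have N1: "real N > 1" using bb by simp
  have step: "f a \<le> f (real N * a)" if "a > 0" for a
  proof -
    have "f a = (\<Sum>d\<in>digit_set B. measure M (ifs_map B d -` {..< -a})) / real (sum_list B)"
      unfolding f_def by (rule ss_measure[OF ss bdv]) simp
    also have "\<dots> \<le> real (card (digit_set B)) * f (real N * a) / real (sum_list B)"
    proof (intro divide_right_mono sum_le_card_mult)
      fix d assume "d \<in> digit_set B"
      have "ifs_map B d -` {..< -a} \<subseteq> {..< -(real N * a)}"
      proof
        fix x assume "x \<in> ifs_map B d -` {..< -a}"
        then have "(x + real d) / real N < -a" using bb by (simp add: ifs_map_def)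
        then have "x + real d < -a * real N" using N1 by (simp add: divide_less_eq)
        then show "x \<in> {..< -(real N * a)}" by (simp add: mult.commute)
      qed
      then show "measure M (ifs_map B d -` {..< -a}) \<le> f (real N * a)"
        unfolding f_def by (intro finite_measure_mono) auto
    qed simp
    also have "\<dots> = f (real N * a)"
    proof -
      have "real (sum_list B) \<noteq> 0" using bb(6) by linarith
      then show ?thesis by (simp add: bb(5))
    qed
    finally show ?thesis .
  qed
  have "(\<lambda>k. f (real N ^ k * a)) \<longlonglongrightarrow> 0"
  proof (rule real_tendsto_sandwich[where f="\<lambda>_. 0" and h="\<lambda>k. cdf M (- (real N ^ k * a))"])
    show "\<forall>\<^sub>F k in sequentially. 0 \<le> f (real N ^ k * a)" by (simp add: f_def)
    show "\<forall>\<^sub>F k in sequentially. f (real N ^ k * a) \<le> cdf M (- (real N ^ k * a))"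
      unfolding f_def cdf_def by (intro always_eventually allI finite_measure_mono) auto
    have "filterlim (\<lambda>k. - (real N ^ k * a)) at_bot sequentially"
      using pow_at_top[OF N1 a] by (simp add: filterlim_uminus_at_top)
    then show "(\<lambda>k. cdf M (- (real N ^ k * a))) \<longlonglongrightarrow> 0"
      by (rule filterlim_compose[OF cdf_lim_at_bot])
  qed simp
  from iter_le_zero[of "real N" f, OF N1 step a this] have "f a \<le> 0" by simp
  then show ?thesis unfolding f_def using measure_nonneg[of M "{..< -a}"] by linarith
qed

lemma upper_tail:
  assumes ss: "self_similar_measure B M" and bdv: "binary_digit_vector N B" and a: "a > 0"
  shows "measure M {1 + a <..} = 0"
proof -
  interpret real_distribution M by (rule ss_real_dist[OF ss])
  note bb = bdv_basic[OF bdv]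
  define f where "f a = measure M {1 + a <..}" for a
  have N1: "real N > 1" using bb by simp
  have step: "f a \<le> f (real N * a)" if "a > 0" for a
  proof -
    have "f a = (\<Sum>d\<in>digit_set B. measure M (ifs_map B d -` {1 + a <..})) / real (sum_list B)"
      unfolding f_def by (rule ss_measure[OF ss bdv]) simp
    also have "\<dots> \<le> real (card (digit_set B)) * f (real N * a) / real (sum_list B)"
    proof (intro divide_right_mono sum_le_card_mult)
      fix d assume "d \<in> digit_set B"
      then have "d \<le> N - 1" using bb by auto
      then have "real d \<le> real N - 1" using bb by linarith
      then have "ifs_map B d -` {1 + a <..} \<subseteq> {1 + real N * a <..}"
      proof -
        assume dN: "real d \<le> real N - 1"
        show ?thesis
        proof
          fix x assume "x \<in> ifs_map B d -` {1 + a <..}"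
          then have "1 + a < (x + real d) / real N" using bb by (simp add: ifs_map_def)
          then have "(1 + a) * real N < x + real d" using N1 by (simp add: less_divide_eq)
          then show "x \<in> {1 + real N * a <..}" using dN by (simp add: algebra_simps)
        qed
      qed
      then show "measure M (ifs_map B d -` {1 + a <..}) \<le> f (real N * a)"
        unfolding f_def by (intro finite_measure_mono) auto
    qed simp
    also have "\<dots> = f (real N * a)"
    proof -
      have "real (sum_list B) \<noteq> 0" using bb(6) by linarith
      then show ?thesis by (simp add: bb(5))
    qed
    finally show ?thesis .
  qed
  have compl: "f b = 1 - cdf M (1 + b)" for b
  proof -
    have "{1 + b <..} = space M - {..1 + b}" by auto
    moreover have "{..1 + b} \<in> events" by simp
    ultimately show ?thesis unfolding f_def cdf_def by (metis prob_compl)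
  qed
  have "(\<lambda>k. f (real N ^ k * a)) \<longlonglongrightarrow> 0"
  proof -
    have "filterlim (\<lambda>k. 1 + real N ^ k * a) at_top sequentially"
      using pow_at_top[OF N1 a] by (rule filterlim_tendsto_add_at_top[OF tendsto_const])
    then have "(\<lambda>k. cdf M (1 + real N ^ k * a)) \<longlonglongrightarrow> 1"
      by (rule filterlim_compose[OF cdf_lim_at_top_prob])
    then have "(\<lambda>k. 1 - cdf M (1 + real N ^ k * a)) \<longlonglongrightarrow> 1 - 1"
      by (intro tendsto_diff tendsto_const)
    then show ?thesis by (simp add: compl)
  qed
  from iter_le_zero[of "real N" f, OF N1 step a this] have "f a \<le> 0" by simp
  then show ?thesis unfolding f_def using measure_nonneg[of M "{1 + a <..}"] by linarith
qed

lemma le_div_zero: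
  fixes m n :: real assumes "m \<le> m / n" "n \<ge> 2" "m \<ge> 0" shows "m = 0"
proof -
  have "m * n \<le> m" using assms by (simp add: le_divide_eq)
  then have "m * (n - 1) \<le> 0" by (simp add: algebra_simps)
  moreover have "n - 1 > 0" using assms by simp
  ultimately show ?thesis using assms(3) by (smt (verit) mult_pos_pos)
qed

lemma sum_single_bound:
  fixes g :: "nat \<Rightarrow> real"
  assumes "finite D" "\<And>d. d \<in> D \<Longrightarrow> g d \<le> (if d = e then m else 0)" "m \<ge> 0"
  shows "sum g D \<le> m"
proof -
  have "sum g D \<le> (\<Sum>d\<in>D. if d = e then m else 0)" by (rule sum_mono) (rule assms(2))
  also have "\<dots> \<le> m" using assms by (simp add: sum.delta')
  finally show ?thesis .
qed

lemma atMost_zero: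
  assumes ss: "self_similar_measure B M" and bdv: "binary_digit_vector N B"
  shows "measure M {..0} = 0"
proof -
  interpret real_distribution M by (rule ss_real_dist[OF ss])
  note bb = bdv_basic[OF bdv]
  have N1: "real N > 1" using bb by simp
  let ?m = "measure M {..0}"
  have "?m = (\<Sum>d\<in>digit_set B. measure M (ifs_map B d -` {..0})) / real (sum_list B)"
    by (rule ss_measure[OF ss bdv]) simp
  also have "\<dots> \<le> ?m / real (sum_list B)"
  proof (intro divide_right_mono sum_single_bound[where e=0])
    fix d assume "d \<in> digit_set B"
    show "measure M (ifs_map B d -` {..0}) \<le> (if d = 0 then ?m else 0)"
    proof (cases "d = 0")
      case True
      have "ifs_map B d -` {..0} = {..0}" using True N1 bb
        by (auto simp: ifs_map_def divide_le_0_iff)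
      then show ?thesis using True by simp
    next
      case False
      have "ifs_map B d -` {..0} \<subseteq> {..< -(1/2)}"
      proof
        fix x assume "x \<in> ifs_map B d -` {..0}"
        then have "(x + real d) / real N \<le> 0" using bb by (simp add: ifs_map_def)
        then have "x + real d \<le> 0" using N1 by (simp add: divide_le_0_iff)
        moreover have "real d \<ge> 1" using False by simp
        ultimately show "x \<in> {..< -(1/2)}" by simp
      qed
      then have "measure M (ifs_map B d -` {..0}) \<le> measure M {..< -(1/2)}"
        by (intro finite_measure_mono) auto
      also have "\<dots> = 0" by (rule lower_tail[OF ss bdv]) simp
      finally show ?thesis using False by simp
    qed
  qed (use bb in auto)
  finally show ?thesis using le_div_zero[of ?m "real (sum_list B)"] bb by simp
qed

lemma greater_one_zero:
  assumes ss: "self_similar_measure B M" and bdv: "binary_digit_vector N B"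
  shows "measure M {1<..} = 0"
proof -
  interpret real_distribution M by (rule ss_real_dist[OF ss])
  note bb = bdv_basic[OF bdv]
  have N1: "real N > 1" using bb by simp
  let ?m = "measure M {1<..}"
  have "?m = (\<Sum>d\<in>digit_set B. measure M (ifs_map B d -` {1<..})) / real (sum_list B)"
    by (rule ss_measure[OF ss bdv]) simp
  also have "\<dots> \<le> ?m / real (sum_list B)"
  proof (intro divide_right_mono sum_single_bound[where e="N - 1"])
    fix d assume d: "d \<in> digit_set B"
    then have dN: "d \<le> N - 1" using bb by auto
    show "measure M (ifs_map B d -` {1<..}) \<le> (if d = N - 1 then ?m else 0)"
    proof (cases "d = N - 1")
      case True
      then have rd: "real d = real N - 1" using bb by simp
      have "ifs_map B d -` {1<..} = {1<..}"
      proof (rule set_eqI)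
        fix x
        have "x \<in> ifs_map B d -` {1<..} \<longleftrightarrow> 1 < (x + real d) / real N" using bb by (simp add: ifs_map_def)
        also have "\<dots> \<longleftrightarrow> real N < x + real d" using N1 by (simp add: less_divide_eq)
        finally show "x \<in> ifs_map B d -` {1<..} \<longleftrightarrow> x \<in> {1<..}" using rd by auto
      qed
      then show ?thesis using True by simp
    next
      case False
      then have rd: "real d \<le> real N - 2" using dN bb by linarith
      have "ifs_map B d -` {1<..} \<subseteq> {1 + 1 <..}"
      proof
        fix x assume "x \<in> ifs_map B d -` {1<..}"
        then have "1 < (x + real d) / real N" using bb by (simp add: ifs_map_def)
        then have "real N < x + real d" using N1 by (simp add: less_divide_eq)
        then show "x \<in> {1 + 1 <..}" using rd by simp
      qed
      then have "measure M (ifs_map B d -` {1<..}) \<le> measure M {1 + 1 <..}"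
        by (intro finite_measure_mono) auto
      also have "\<dots> = 0" by (rule upper_tail[OF ss bdv]) simp
      finally show ?thesis using False by simp
    qed
  qed (use bb in auto)
  finally show ?thesis using le_div_zero[of ?m "real (sum_list B)"] bb by simp
qed

lemma unit_one:
  assumes ss: "self_similar_measure B M" and bdv: "binary_digit_vector N B"
    and S: "{0..1} \<subseteq> S" "S \<in> sets borel"
  shows "measure M S = 1"
proof -
  interpret real_distribution M by (rule ss_real_dist[OF ss])
  have sp: "space M = UNIV" using events_eq_borel sets_eq_imp_space_eq by fastforce
  have sub: "UNIV - S \<subseteq> {..0} \<union> {1<..}"
  proof
    fix x assume "x \<in> UNIV - S"
    then have "x \<notin> {0..1}" using S by blast
    then show "x \<in> {..0} \<union> {1<..}" by auto
  qed
  have "measure M (UNIV - S) \<le> measure M ({..0} \<union> {1<..})"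
    using sub by (intro finite_measure_mono) auto
  also have "\<dots> \<le> measure M {..0} + measure M {1<..}"
    by (intro measure_subadditive) auto
  also have "\<dots> = 0" using atMost_zero[OF ss bdv] greater_one_zero[OF ss bdv] by simp
  finally have "measure M (UNIV - S) \<le> 0" .
  moreover have "measure M (UNIV - S) = 1 - measure M S"
    using prob_compl[of S] S sp by simp
  ultimately show ?thesis using prob_le_1[of S] by linarith
qed

lemma cdf_formula:
  assumes ss: "self_similar_measure B M" and bdv: "binary_digit_vector N B" and k: "k \<le> N"
  shows "measure M {0 .. real k / real N} = real (card (digit_set B \<inter> {..<k})) / real (sum_list B)"
proof -
  interpret real_distribution M by (rule ss_real_dist[OF ss])
  note bb = bdv_basic[OF bdv]
  have N1: "real N > 1" using bb by simp
  have "measure M {0 .. real k / real N} =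
     (\<Sum>d\<in>digit_set B. measure M (ifs_map B d -` {0 .. real k / real N})) / real (sum_list B)"
    by (rule ss_measure[OF ss bdv]) simp
  also have "(\<Sum>d\<in>digit_set B. measure M (ifs_map B d -` {0 .. real k / real N})) =
      (\<Sum>d\<in>digit_set B. if d < k then 1 else 0)"
  proof (rule sum.cong[OF refl])
    fix d
    have pre: "ifs_map B d -` {0 .. real k / real N} = {- real d .. real k - real d}"
    proof (rule set_eqI)
      fix x
      have "x \<in> ifs_map B d -` {0 .. real k / real N} \<longleftrightarrow> 0 \<le> (x + real d) / real N \<and> (x + real d) / real N \<le> real k / real N"
        using bb by (simp add: ifs_map_def)
      also have "\<dots> \<longleftrightarrow> 0 \<le> x + real d \<and> x + real d \<le> real k"
        using N1 by (simp add: zero_le_divide_iff divide_le_cancel)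
      finally show "x \<in> ifs_map B d -` {0 .. real k / real N} \<longleftrightarrow> x \<in> {- real d .. real k - real d}" by auto
    qed
    show "measure M (ifs_map B d -` {0 .. real k / real N}) = (if d < k then 1 else 0)"
    proof (cases "d < k")
      case True
      then have "real d + 1 \<le> real k" by linarith
      then have "{0..1} \<subseteq> {- real d .. real k - real d}" by auto
      then show ?thesis using unit_one[OF ss bdv] pre True by simp
    next
      case False
      then have "{- real d .. real k - real d} \<subseteq> {..0}" by auto
      then have "measure M {- real d .. real k - real d} \<le> measure M {..0}"
        by (intro finite_measure_mono) auto
      then show ?thesis using atMost_zero[OF ss bdv] pre False measure_nonneg[of M "{- real d .. real k - real d}"] by simp
    qed
  qed
  also have "(\<Sum>d\<in>digit_set B. if d < k then 1 else 0) = real (card (digit_set B \<inter> {..<k}))"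
    by (simp add: sum.If_cases bb Int_def)
  finally show ?thesis .
qed

lemma cdf_rec:
  assumes ss: "self_similar_measure B M" and bdv: "binary_digit_vector N B"
  shows "cdf M x = (\<Sum>d\<in>digit_set B. cdf M (real N * x - real d)) / real (sum_list B)"
proof -
  note bb = bdv_basic[OF bdv]
  have N1: "real N > 1" using bb by simp
  have pre: "ifs_map B d -` {..x} = {..real N * x - real d}" for d
  proof (rule set_eqI)
    fix y
    have "y \<in> ifs_map B d -` {..x} \<longleftrightarrow> (y + real d) / real N \<le> x" using bb by (simp add: ifs_map_def)
    also have "\<dots> \<longleftrightarrow> y + real d \<le> x * real N" using N1 by (simp add: divide_le_eq)
    finally show "y \<in> ifs_map B d -` {..x} \<longleftrightarrow> y \<in> {..real N * x - real d}" by (auto simp: mult.commute)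
  qed
  show ?thesis unfolding cdf_def using ss_measure[OF ss bdv, of "{..x}"] by (simp add: pre)
qed

lemma cdf_int:
  assumes ss: "self_similar_measure B M" and bdv: "binary_digit_vector N B"
  shows "cdf M (real_of_int j) = (if j \<le> 0 then 0 else 1)"
proof -
  interpret real_distribution M by (rule ss_real_dist[OF ss])
  show ?thesis
  proof (cases "j \<le> 0")
    case True
    then have "measure M {..real_of_int j} \<le> measure M {..0}" by (intro finite_measure_mono) auto
    then show ?thesis using True atMost_zero[OF ss bdv] measure_nonneg[of M "{..real_of_int j}"]
      unfolding cdf_def by simp
  next
    case False
    then have "{0..1} \<subseteq> {..real_of_int j}" by auto
    then show ?thesis using False unit_one[OF ss bdv] unfolding cdf_def by simp
  qed
qed

lemma ss_unique:
  assumes ss1: "self_similar_measure B M1" and ss2: "self_similar_measure B M2"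
    and bdv: "binary_digit_vector N B"
  shows "M1 = M2"
proof -
  interpret R1: real_distribution M1 by (rule ss_real_dist[OF ss1])
  interpret R2: real_distribution M2 by (rule ss_real_dist[OF ss2])
  note bb = bdv_basic[OF bdv]
  have N1: "real N > 1" using bb by simp
  have dy: "\<forall>j::int. cdf M1 (real_of_int j / real N ^ m) = cdf M2 (real_of_int j / real N ^ m)" for m
  proof (induction m)
    case 0
    then show ?case using cdf_int[OF ss1 bdv] cdf_int[OF ss2 bdv] by simp
  next
    case (Suc m)
    show ?case
    proof
      fix j :: int
      have eq: "real N * (real_of_int j / real N ^ Suc m) - real d = real_of_int (j - int d * int N ^ m) / real N ^ m" for d
        using N1 by (simp add: field_simps)
      show "cdf M1 (real_of_int j / real N ^ Suc m) = cdf M2 (real_of_int j / real N ^ Suc m)"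
      proof -
        have "cdf M1 (real_of_int j / real N ^ Suc m) = (\<Sum>d\<in>digit_set B. cdf M1 (real_of_int (j - int d * int N ^ m) / real N ^ m)) / real (sum_list B)"
          by (subst cdf_rec[OF ss1 bdv]) (simp only: eq)
        moreover have "cdf M2 (real_of_int j / real N ^ Suc m) = (\<Sum>d\<in>digit_set B. cdf M2 (real_of_int (j - int d * int N ^ m) / real N ^ m)) / real (sum_list B)"
          by (subst cdf_rec[OF ss2 bdv]) (simp only: eq)
        ultimately show ?thesis using Suc.IH by presburger
      qed
    qed
  qed
  have "cdf M1 x = cdf M2 x" for x
  proof -
    define s where "s m = real_of_int (\<lfloor>x * real N ^ m\<rfloor> + 1) / real N ^ m" for m
    have pos: "real N ^ m > 0" for m using N1 by simp
    have gt: "x < s m" for m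
    proof -
      have "x * real N ^ m < real_of_int (\<lfloor>x * real N ^ m\<rfloor> + 1)" by linarith
      then show ?thesis unfolding s_def using pos[of m] by (simp add: less_divide_eq)
    qed
    have le: "s m \<le> x + inverse (real N ^ m)" for m
    proof -
      have "real_of_int (\<lfloor>x * real N ^ m\<rfloor> + 1) \<le> x * real N ^ m + 1" by linarith
      then have "s m \<le> (x * real N ^ m + 1) / real N ^ m"
        unfolding s_def using pos[of m] by (intro divide_right_mono) auto
      also have "\<dots> = x + inverse (real N ^ m)" using pos[of m] by (simp add: field_simps)
      finally show ?thesis .
    qed
    have lim: "s \<longlonglongrightarrow> x"
    proof (rule real_tendsto_sandwich[where f="\<lambda>_. x" and h="\<lambda>m. x + inverse (real N ^ m)"])
      show "\<forall>\<^sub>F m in sequentially. x \<le> s m" using gt by (simp add: less_imp_le)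
      show "\<forall>\<^sub>F m in sequentially. s m \<le> x + inverse (real N ^ m)" using le by simp
      show "(\<lambda>m. x + inverse (real N ^ m)) \<longlonglongrightarrow> x"
        using tendsto_add[OF tendsto_const LIMSEQ_inverse_realpow_zero[OF N1], of x] by simp
    qed simp
    have fl: "filterlim s (at_right x) sequentially"
      unfolding filterlim_at using lim gt by (auto intro: always_eventually simp: less_imp_neq[THEN not_sym])
    have c1: "(\<lambda>m. cdf M1 (s m)) \<longlonglongrightarrow> cdf M1 x"
      using filterlim_compose[OF R1.cdf_is_right_cont[unfolded continuous_within] fl] .
    have c2: "(\<lambda>m. cdf M2 (s m)) \<longlonglongrightarrow> cdf M2 x"
      using filterlim_compose[OF R2.cdf_is_right_cont[unfolded continuous_within] fl] .
    have "(\<lambda>m. cdf M1 (s m)) = (\<lambda>m. cdf M2 (s m))" unfolding s_def using dy by blast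
    with c1 c2 show ?thesis using LIMSEQ_unique by metis
  qed
  then show ?thesis
    using cdf_unique[OF ss_real_dist[OF ss1] ss_real_dist[OF ss2]] by auto
qed



definition fdig :: "nat \<Rightarrow> nat stream \<Rightarrow> real" where
  "fdig N \<omega> = (\<Sum>i. real (min (\<omega> !! i) (N - 1)) / real N ^ Suc i)"

lemma fdig_summable:
  assumes N: "N \<ge> 2"
  shows "summable (\<lambda>i. real (min (\<omega> !! i) (N - 1)) / real N ^ Suc i)"
proof (rule summable_comparison_test'[where g="\<lambda>i. (inverse (real N)) ^ i"])
  show "summable (\<lambda>i. (inverse (real N)) ^ i)" using N by (intro summable_geometric) (simp add: inverse_less_1_iff)
  fix i
  have "real (min (\<omega> !! i) (N - 1)) \<le> real N" by simp
  then have "real (min (\<omega> !! i) (N - 1)) / real N ^ Suc i \<le> real N / real N ^ Suc i"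
    using N by (intro divide_right_mono) auto
  also have "\<dots> = (inverse (real N)) ^ i" using N by (simp add: power_inverse field_simps)
  finally show "norm (real (min (\<omega> !! i) (N - 1)) / real N ^ Suc i) \<le> (inverse (real N)) ^ i" by simp
qed

lemma fdig_Stream:
  assumes N: "N \<ge> 2"
  shows "fdig N (x ## X) = (real (min x (N - 1)) + fdig N X) / real N"
proof -
  define g where "g i = real (min ((x ## X) !! i) (N - 1)) / real N ^ Suc i" for i
  have sg: "summable g" unfolding g_def by (rule fdig_summable[OF N])
  have "(\<Sum>n. g (Suc n)) = (\<Sum>n. (1 / real N) * (real (min (X !! n) (N - 1)) / real N ^ Suc n))"
    unfolding g_def by (simp add: field_simps)
  also have "\<dots> = (1 / real N) * fdig N X" unfolding fdig_def
    by (rule suminf_mult[OF fdig_summable[OF N]])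
  finally have "suminf g = g 0 + (1 / real N) * fdig N X" using suminf_split_head[OF sg] by simp
  moreover have "fdig N (x ## X) = suminf g" unfolding fdig_def g_def ..
  moreover have "g 0 = real (min x (N - 1)) / real N" by (simp add: g_def)
  ultimately show ?thesis by (simp add: add_divide_distrib)
qed

lemma fdig_measurable[measurable]: "fdig N \<in> borel_measurable (stream_space (measure_pmf p))"
  unfolding fdig_def by measurable

lemma ss_exists:
  assumes bdv: "binary_digit_vector N B"
  shows "\<exists>M. self_similar_measure B M"
proof -
  note bb = bdv_basic[OF bdv]
  define D where "D = digit_set B"
  have fin: "finite D" using bb by (simp add: D_def)
  have ne: "D \<noteq> {}"
  proof
    assume "D = {}"
    then have "card (digit_set B) = 0" by (simp add: D_def)
    then show False using bb(5,6) by linarith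
  qed
  have N2: "N \<ge> 2" using bb by simp
  define P where "P = measure_pmf (pmf_of_set D)"
  define S where "S = stream_space P"
  interpret P: prob_space P unfolding P_def by (rule prob_space_measure_pmf)
  have pS: "prob_space S" unfolding S_def by (rule P.prob_space_stream_space)
  define \<mu> where "\<mu> = distr S borel (fdig N)"
  have fm: "fdig N \<in> borel_measurable S" unfolding S_def P_def by measurable
  have repr: "emeasure \<mu> A = (\<integral>\<^sup>+\<omega>. indicator A (fdig N \<omega>) \<partial>S)" if A: "A \<in> sets borel" for A
  proof -
    have "emeasure \<mu> A = (\<integral>\<^sup>+y. indicator A y \<partial>\<mu>)"
      using A by (simp add: \<mu>_def)
    also have "\<dots> = (\<integral>\<^sup>+\<omega>. indicator A (fdig N \<omega>) \<partial>S)"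
      unfolding \<mu>_def using fm A by (subst nn_integral_distr) auto
    finally show ?thesis .
  qed
  have "self_similar_measure B \<mu>"
    unfolding self_similar_measure_def
  proof (intro conjI ballI)
    show "sets \<mu> = sets borel" by (simp add: \<mu>_def)
    show "prob_space \<mu>" unfolding \<mu>_def using fm by (rule prob_space.prob_space_distr[OF pS])
    fix A :: "real set" assume A: "A \<in> sets borel"
    have meas: "ifs_map B d \<in> borel_measurable borel" for d
      unfolding ifs_map_def by measurable
    have pre: "ifs_map B d -` A \<in> sets borel" for d
      using measurable_sets[OF meas A] by simp
    have Am[measurable]: "A \<in> sets borel" by (rule A)
    have "emeasure \<mu> A = (\<integral>\<^sup>+\<omega>. indicator A (fdig N \<omega>) \<partial>S)" by (rule repr[OF A])
    also have "\<dots> = (\<integral>\<^sup>+x. (\<integral>\<^sup>+X. indicator A (fdig N (x ## X)) \<partial>S) \<partial>P)"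
      unfolding S_def by (rule P.nn_integral_stream_space) (unfold P_def, measurable)
    also have "\<dots> = (\<Sum>x\<in>D. (\<integral>\<^sup>+X. indicator A (fdig N (x ## X)) \<partial>S)) / of_nat (card D)"
      unfolding P_def by (rule nn_integral_pmf_of_set[OF ne fin])
    also have "(\<Sum>x\<in>D. (\<integral>\<^sup>+X. indicator A (fdig N (x ## X)) \<partial>S)) = (\<Sum>x\<in>D. emeasure \<mu> (ifs_map B x -` A))"
    proof (rule sum.cong[OF refl])
      fix x assume x: "x \<in> D"
      then have "x \<le> N - 1" using bb by (auto simp: D_def)
      then have mx: "min x (N - 1) = x" "min x (N - Suc 0) = x" by auto
      have "(\<integral>\<^sup>+X. indicator A (fdig N (x ## X)) \<partial>S) = (\<integral>\<^sup>+X. indicator (ifs_map B x -` A) (fdig N X) \<partial>S)"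
        by (intro nn_integral_cong) (simp add: fdig_Stream[OF N2] mx ifs_map_def bb add.commute indicator_def)
      also have "\<dots> = emeasure \<mu> (ifs_map B x -` A)" by (rule repr[OF pre, symmetric])
      finally show "(\<integral>\<^sup>+X. indicator A (fdig N (x ## X)) \<partial>S) = emeasure \<mu> (ifs_map B x -` A)" .
    qed
    finally show "emeasure \<mu> A = (\<Sum>d\<in>digit_set B. emeasure \<mu> (ifs_map B d -` A)) / of_nat (sum_list B)"
      using bb by (simp add: D_def)
  qed
  then show ?thesis by blast
qed



lemma mu_B_ss:
  assumes bdv: "binary_digit_vector N B"
  shows "self_similar_measure B (mu_B B)"
proof -
  have "\<exists>!M. self_similar_measure B M"
    using ss_exists[OF bdv] ss_unique[OF _ _ bdv] by blast
  then show ?thesis unfolding mu_B_def by (rule theI')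
qed

lemma cnt_Suc:
  assumes bdv: "binary_digit_vector N B" and k: "k < N"
  shows "card (digit_set B \<inter> {..<Suc k}) = card (digit_set B \<inter> {..<k}) + B ! k"
proof -
  note bb = bdv_basic[OF bdv]
  show ?thesis
  proof (cases "B ! k = 1")
    case True
    then have "digit_set B \<inter> {..<Suc k} = insert k (digit_set B \<inter> {..<k})"
      using k bb by (auto simp: digit_set_def)
    then show ?thesis using True by simp
  next
    case False
    then have z: "B ! k = 0" using bb(8)[OF k] by auto
    have "digit_set B \<inter> {..<Suc k} = digit_set B \<inter> {..<k}"
      using False by (auto simp: digit_set_def less_Suc_eq)
    then show ?thesis using z by simp
  qed
qed

lemma cnt_N:
  assumes bdv: "binary_digit_vector N B"
  shows "card (digit_set B \<inter> {..<N}) = sum_list B"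
proof -
  note bb = bdv_basic[OF bdv]
  have "digit_set B \<inter> {..<N} = digit_set B" using bb by auto
  then show ?thesis using bb by simp
qed

theorem theorem2p1:
  fixes N :: nat and B C :: "nat list"
  assumes "binary_digit_vector N B" and "binary_digit_vector N C"
    and "\<forall>k \<in> {1..N-1}. cdf_B B (real k / real N) = cdf_B C (real k / real N)"
  shows "B = C"
proof -
  note bB = bdv_basic[OF assms(1)] and bC = bdv_basic[OF assms(2)]
  define cB where "cB k = card (digit_set B \<inter> {..<k})" for k
  define cC where "cC k = card (digit_set C \<inter> {..<k})" for k
  define nB where "nB = sum_list B"
  define nC where "nC = sum_list C"
  have nBp: "real nB > 0" "nB \<ge> 2" using bB by (auto simp: nB_def)
  have nCp: "real nC > 0" "nC \<ge> 2" using bC by (auto simp: nC_def)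
  have cross: "cB k * nC = cC k * nB" if k: "k \<le> N" for k
  proof -
    consider "k = 0" | "k = N" | "1 \<le> k \<and> k \<le> N - 1" using k by linarith
    then show ?thesis
    proof cases
      case 1 then show ?thesis by (simp add: cB_def cC_def)
    next
      case 2 then show ?thesis using cnt_N[OF assms(1)] cnt_N[OF assms(2)]
        by (simp add: cB_def cC_def nB_def nC_def)
    next
      case 3
      then have "cdf_B B (real k / real N) = cdf_B C (real k / real N)" using assms(3) by auto
      then have "real (cB k) / real nB = real (cC k) / real nC"
        unfolding cdf_B_def cB_def cC_def nB_def nC_def
        using cdf_formula[OF mu_B_ss[OF assms(1)] assms(1) k] cdf_formula[OF mu_B_ss[OF assms(2)] assms(2) k]
        by simp
      then have "real (cB k) * real nC = real (cC k) * real nB" using nBp nCp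
        by (simp add: field_simps)
      then show ?thesis by (metis of_nat_eq_iff of_nat_mult)
    qed
  qed
  have dig: "B ! k * nC = C ! k * nB" if k: "k < N" for k
  proof -
    have "cB (Suc k) * nC = cC (Suc k) * nB" using cross k by simp
    then have "(cB k + B ! k) * nC = (cC k + C ! k) * nB"
      using cnt_Suc[OF assms(1) k] cnt_Suc[OF assms(2) k] by (simp add: cB_def cC_def)
    moreover have "cB k * nC = cC k * nB" using cross k by simp
    ultimately show ?thesis by (simp add: add_mult_distrib)
  qed
  obtain k0 where k0: "k0 \<in> digit_set B"
  proof -
    have "digit_set B \<noteq> {}"
    proof
      assume "digit_set B = {}"
      then have "card (digit_set B) = 0" by simp
      then show False using bB(5,6) by linarith
    qed
    then show ?thesis using that by blast
  qed
  then have k0N: "k0 < N" and Bk0: "B ! k0 = 1" using bB by (auto simp: digit_set_def)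
  have "nC = C ! k0 * nB" using dig[OF k0N] Bk0 by simp
  moreover have "C ! k0 = 0 \<or> C ! k0 = 1" using bC(8)[OF k0N] .
  ultimately have eqn: "nC = nB" using nCp by auto
  show ?thesis
  proof (rule nth_equalityI)
    show "length B = length C" using bB bC by simp
    fix k assume "k < length B"
    then have "k < N" using bB by simp
    then have "B ! k * nB = C ! k * nB" using dig eqn by simp
    then show "B ! k = C ! k" using nBp by simp
  qed
qed


end
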